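(* Let $G=(V,E)$ be a finite connected graph and $A$ an irreducible, lazy transition matrix on $V$, with $E_A=\{(i,j)\in V\times V:A(i,j)>0\}$. Suppose $x\in S^{(i)}$ and $v\in V$. Then there exist a finite integer $\sigma(i)$ and a sequence $(i_1=v,i_2,\dots,i_{\sigma(i)}=i)\in V^{\sigma(i)}$ with $(i_j,i_{j+1})\in E_A$ for all $j$, such that $$T_{i_{\sigma(i)}}\cdots T_{i_1}x\in S^{(i)}.$$
   Context: $S=(-\mathbb{N}_0)^V$ and $S^{(i)}=\{x\in S:x_i=0\}$. For $x\in S$ and $i\in V$, $T_ix\in S$ is obtained by first setting $x'_i=\max\{x_k:\operatorname{dist}(k,i)\le1\}+1$, $x'_j=x_j$ for $j\ne i$ (dist the graph distance in $G$), and then $(T_ix)_j=x'_j-\max_kx'_k$. Irreducible: for all $v\neq v'$ there is $s$ with $A^s(v,v')>0$; lazy: $A(v,v)>0$ for all $v$. *)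

theory Defs
  imports Main "HOL-Library.Extended_Nat"
begin

definition simple_graph :: "('v \<Rightarrow> 'v \<Rightarrow> bool) \<Rightarrow> bool" where
  "simple_graph E \<longleftrightarrow> (\<forall>u w. E u w \<longrightarrow> E w u) \<and> (\<forall>u. \<not> E u u)"

definition connected_graph :: "('v \<Rightarrow> 'v \<Rightarrow> bool) \<Rightarrow> bool" where
  "connected_graph E \<longleftrightarrow> (\<forall>u w. E\<^sup>*\<^sup>* u w)"

definition gdist :: "('v \<Rightarrow> 'v \<Rightarrow> bool) \<Rightarrow> 'v \<Rightarrow> 'v \<Rightarrow> enat" where
  "gdist E u w = (INF n \<in> {n. (E ^^ n) u w}. enat n)"

definition stochastic :: "('v::finite \<Rightarrow> 'v \<Rightarrow> real) \<Rightarrow> bool" where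
  "stochastic A \<longleftrightarrow> (\<forall>i j. A i j \<ge> 0) \<and> (\<forall>i. (\<Sum>j\<in>UNIV. A i j) = 1)"

fun matpow :: "('v::finite \<Rightarrow> 'v \<Rightarrow> real) \<Rightarrow> nat \<Rightarrow> 'v \<Rightarrow> 'v \<Rightarrow> real" where
  "matpow A 0 = (\<lambda>i j. if i = j then 1 else 0)"
| "matpow A (Suc n) = (\<lambda>i j. \<Sum>k\<in>UNIV. matpow A n i k * A k j)"

definition irreducible_mat :: "('v::finite \<Rightarrow> 'v \<Rightarrow> real) \<Rightarrow> bool" where
  "irreducible_mat A \<longleftrightarrow> (\<forall>v v'. v \<noteq> v' \<longrightarrow> (\<exists>s. matpow A s v v' > 0))"

definition lazy_mat :: "('v \<Rightarrow> 'v \<Rightarrow> real) \<Rightarrow> bool" where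
  "lazy_mat A \<longleftrightarrow> (\<forall>v. A v v > 0)"

definition Sset :: "('v \<Rightarrow> int) set" where
  "Sset = {x. \<forall>j. x j \<le> 0}"

definition Si :: "'v \<Rightarrow> ('v \<Rightarrow> int) set" where
  "Si i = {x \<in> Sset. x i = 0}"

definition Tmap :: "('v::finite \<Rightarrow> 'v \<Rightarrow> bool) \<Rightarrow> 'v \<Rightarrow> ('v \<Rightarrow> int) \<Rightarrow> ('v \<Rightarrow> int)" where
  "Tmap E i x = (let x' = x(i := Max {x k | k. gdist E k i \<le> 1} + 1)
                 in (\<lambda>j. x' j - Max (range x')))"

end

theory Submission
  imports Defs
begin

lemma matpow_nonneg:
  assumes "\<forall>i j. A i j \<ge> 0"
  shows "matpow A s u w \<ge> 0"
  using assms by (induction s arbitrary: w) (auto intro!: sum_nonneg mult_nonneg_nonneg)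

lemma walk_exists:
  fixes A :: "'v::finite \<Rightarrow> 'v \<Rightarrow> real"
  assumes nn: "\<forall>i j. A i j \<ge> 0" and "matpow A s u w > 0"
  shows "\<exists>is. is \<noteq> [] \<and> hd is = u \<and> last is = w
           \<and> (\<forall>j. Suc j < length is \<longrightarrow> A (is ! j) (is ! Suc j) > 0)"
  using assms(2)
proof (induction s arbitrary: w)
  case 0
  then have "u = w" by (auto split: if_splits)
  then show ?case by (intro exI[of _ "[u]"]) auto
next
  case (Suc s)
  from Suc.prems have "(\<Sum>k\<in>UNIV. matpow A s u k * A k w) > 0" by simp
  have "\<exists>k. matpow A s u k * A k w > 0"
  proof (rule ccontr)
    assume "\<not> ?thesis"
    then have "\<forall>k. matpow A s u k * A k w \<le> 0" by (simp add: not_less)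
    then have "(\<Sum>k\<in>UNIV. matpow A s u k * A k w) \<le> 0" by (simp add: sum_nonpos)
    then show False using \<open>(\<Sum>k\<in>UNIV. matpow A s u k * A k w) > 0\<close> by simp
  qed
  then obtain k where k: "matpow A s u k * A k w > 0" by blast
  have m0: "matpow A s u k \<ge> 0" using matpow_nonneg[OF nn] by blast
  have a0: "A k w \<ge> 0" using nn by blast
  have "matpow A s u k > 0" using k m0 a0
    by (auto simp: zero_less_mult_iff)
  moreover have "A k w > 0" using k m0 a0
    by (auto simp: zero_less_mult_iff)
  ultimately obtain ws where hw: "ws \<noteq> []" "hd ws = u" "last ws = k"
    "\<forall>j. Suc j < length ws \<longrightarrow> A (ws ! j) (ws ! Suc j) > 0"
    using Suc.IH by blast
  show ?case
  proof (intro exI[of _ "ws @ [w]"] conjI allI impI)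
    fix j assume j: "Suc j < length (ws @ [w])"
    show "A ((ws @ [w]) ! j) ((ws @ [w]) ! Suc j) > 0"
    proof (cases "Suc j < length ws")
      case True then show ?thesis using hw(4) by (simp add: nth_append)
    next
      case False
      then have "Suc j = length ws" using j by simp
      then have "j = length ws - 1" by simp
      then show ?thesis using hw \<open>A k w > 0\<close>
        by (simp add: nth_append last_conv_nth)
    qed
  qed (use hw in auto)
qed

definition DD :: "'v::finite \<Rightarrow> ('v \<Rightarrow> int) \<Rightarrow> int" where
  "DD i y = Max (range y) - y i"

lemma gdist_self: "gdist E i i \<le> 1"
proof -
  have "gdist E i i \<le> enat 0" unfolding gdist_def
    by (rule INF_lower) simp
  then show ?thesis by (simp add: zero_enat_def[symmetric])
qed

lemma Tmap_facts:
  fixes y :: "'v::finite \<Rightarrow> int"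
  shows "(\<forall>j. Tmap E i y j \<le> 0) \<and> Max (range (Tmap E i y)) = 0
         \<and> DD i (Tmap E i y) \<le> max 0 (DD i y - 1)"
proof -
  define N where "N = Max {y k | k. gdist E k i \<le> 1}"
  define x' where "x' = y(i := N + 1)"
  define M where "M = Max (range x')"
  have T: "Tmap E i y = (\<lambda>j. x' j - M)"
    unfolding Tmap_def N_def x'_def M_def by (simp add: Let_def)
  have fin: "finite {y k | k. gdist E k i \<le> 1}" by simp
  have yiN: "y i \<le> N" unfolding N_def
  proof (rule Max_ge[OF fin])
    have "y i = y i \<and> gdist E i i \<le> 1" using gdist_self[of E i] by simp
    then have "\<exists>k. y i = y k \<and> gdist E k i \<le> 1" by (rule exI[of _ i])
    then show "y i \<in> {y k | k. gdist E k i \<le> 1}" by (simp only: mem_Collect_eq)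
  qed
  have xM: "x' j \<le> M" for j unfolding M_def by simp
  have "M \<in> range x'" unfolding M_def by (rule Max_in) auto
  then obtain j0 where j0: "x' j0 = M" by auto
  have le0: "\<forall>j. Tmap E i y j \<le> 0" using xM T by simp
  have mx: "Max (range (Tmap E i y)) = 0"
  proof (rule antisym)
    show "Max (range (Tmap E i y)) \<le> 0" using le0 by (simp add: Max_le_iff)
    show "0 \<le> Max (range (Tmap E i y))"
    proof -
      have "Tmap E i y j0 = 0" using j0 T by simp
      moreover have "Tmap E i y j0 \<le> Max (range (Tmap E i y))" by simp
      ultimately show ?thesis by simp
    qed
  qed
  have yM: "y j \<le> Max (range y)" for j by simp
  have "M \<le> max (N + 1) (N + DD i y)"
  proof -
    have "x' j0 \<le> max (N + 1) (N + DD i y)"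
    proof (cases "j0 = i")
      case True then show ?thesis by (simp add: x'_def)
    next
      case False
      then have "x' j0 = y j0" by (simp add: x'_def)
      also have "\<dots> \<le> Max (range y)" by simp
      also have "\<dots> = y i + DD i y" by (simp add: DD_def)
      also have "\<dots> \<le> N + DD i y" using yiN by simp
      finally show ?thesis by simp
    qed
    then show ?thesis using j0 by simp
  qed
  moreover have "DD i (Tmap E i y) = M - (N + 1)"
    using mx T by (simp add: DD_def x'_def)
  ultimately show ?thesis using le0 mx by simp
qed

lemma iter_DD:
  fixes y :: "'v::finite \<Rightarrow> int"
  shows "DD i ((Tmap E i ^^ Suc m) y) \<le> max 0 (DD i y - int m - 1)"
proof (induction m)
  case 0 then show ?case using Tmap_facts[of E i y] by simp
next
  case (Suc m)
  have "DD i ((Tmap E i ^^ Suc (Suc m)) y) \<le> max 0 (DD i ((Tmap E i ^^ Suc m) y) - 1)"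
    using Tmap_facts[of E i "(Tmap E i ^^ Suc m) y"] by simp
  then show ?case using Suc.IH by simp
qed

lemma fold_rep: "fold f (replicate m a) x = (f a ^^ m) x"
  by (induction m arbitrary: x) (auto simp: funpow_swap1)

theorem mainTheorem9:
  fixes E :: "'v::finite \<Rightarrow> 'v \<Rightarrow> bool" and A :: "'v \<Rightarrow> 'v \<Rightarrow> real"
    and x :: "'v \<Rightarrow> int" and i v :: 'v
  assumes "simple_graph E" and "connected_graph E"
    and "stochastic A" and "irreducible_mat A" and "lazy_mat A"
    and "x \<in> Si i"
  shows "\<exists>is. is \<noteq> [] \<and> hd is = v \<and> last is = i
           \<and> (\<forall>j. Suc j < length is \<longrightarrow> A (is ! j) (is ! Suc j) > 0)
           \<and> fold (Tmap E) is x \<in> Si i"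
proof -
  have nn: "\<forall>i j. A i j \<ge> 0" using assms(3) unfolding stochastic_def by blast
  have Aii: "A i i > 0" using assms(5) unfolding lazy_mat_def by blast
  obtain ws where ws: "ws \<noteq> []" "hd ws = v" "last ws = i"
    "\<forall>j. Suc j < length ws \<longrightarrow> A (ws ! j) (ws ! Suc j) > 0"
  proof (cases "v = i")
    case True then show ?thesis using that[of "[i]"] by simp
  next
    case False
    then obtain s where "matpow A s v i > 0" using assms(4) unfolding irreducible_mat_def by blast
    then show ?thesis using walk_exists[OF nn] that by blast
  qed
  define y0 where "y0 = fold (Tmap E) ws x"
  define m where "m = nat (DD i y0)"
  define z where "z = (Tmap E i ^^ Suc m) y0"
  have zT: "z = Tmap E i ((Tmap E i ^^ m) y0)" unfolding z_def by simp
  have "DD i z \<le> 0" unfolding z_def using iter_DD[where i=i and E=E and m=m and y=y0] m_def by simp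
  moreover have "Max (range z) = 0" "\<forall>j. z j \<le> 0" using Tmap_facts zT by blast+
  ultimately have zS: "z \<in> Si i" unfolding Si_def Sset_def DD_def
    by (simp add: antisym)
  define L where "L = ws @ replicate (Suc m) i"
  have foldL: "fold (Tmap E) L x = z"
    unfolding L_def z_def y0_def by (simp add: fold_rep funpow_swap1)
  show ?thesis
  proof (intro exI[of _ L] conjI allI impI)
    fix j assume j: "Suc j < length L"
    show "A (L ! j) (L ! Suc j) > 0"
    proof (cases "Suc j < length ws")
      case True then show ?thesis using ws(4) by (simp add: L_def nth_append)
    next
      case False
      have "L ! j = i"
      proof (cases "j < length ws")
        case True
        then have "j = length ws - 1" using False by simp
        then show ?thesis using ws True by (simp add: L_def nth_append last_conv_nth)
      next
        case False then show ?thesis using j by (simp add: L_def nth_append del: replicate_Suc)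
      qed
      moreover have "L ! Suc j = i" using False j by (simp add: L_def nth_append del: replicate_Suc)
      ultimately show ?thesis using Aii by simp
    qed
  qed (use ws foldL zS in \<open>auto simp: L_def\<close>)
qed

end
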